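(* Fix the data $N\ge 1$, $\hat s\in\{0,1\}^N$, $\hat y\in\{0,1\}^N$, $p\in\mathbb{R}_{\ge 0}^N$ and $\epsilon\ge 0$, and let $\mathcal{RC}$ and $\mathcal{RC}_\mathcal{E}$ be the two optimization problems defined in the context. Then the two problems have the same optimal solutions, in the following sense: (i) $\mathcal{RC}$ is feasible if and only if $\mathcal{RC}_\mathcal{E}$ is feasible, and in that case their optimal objective values coincide; (ii) for every optimal solution $(s_{01}^+,s_{10}^+,s_{01}^-,s_{10}^-)$ of $\mathcal{RC}_\mathcal{E}$, every vector $s^*$ obtained from it by the post-processing $\Phi$ is an optimal solution of $\mathcal{RC}$; (iii) every optimal solution $s^*$ of $\mathcal{RC}$ is obtained by the post-processing $\Phi$ from some optimal solution of $\mathcal{RC}_\mathcal{E}$ (namely from the tuple counting, in each of the four groups, how many entries of $\hat s$ were flipped in $s^*$).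
   Context: Data: an integer $N\ge1$; an initial guess $\hat s=(\hat s_1,\dots,\hat s_N)\in\{0,1\}^N$ of a binary sensitive attribute; predictions $\hat y=(\hat y_1,\dots,\hat y_N)\in\{0,1\}^N$; confidence weights $p=(p_1,\dots,p_N)$ with $p_i\ge0$; a tolerance $\epsilon\ge0$. Let $\bar y=\frac1N\sum_{i=1}^N\hat y_i$. Problem $\mathcal{RC}$ (general model): variables $s^*=(s^*_1,\dots,s^*_N)\in\{0,1\}^N$; minimize $\sum_{i=1}^N p_i(1-\hat s_i)s^*_i+\sum_{i=1}^N p_i\hat s_i(1-s^*_i)$ subject to $\sum_i s^*_i>0$, $\sum_i(1-s^*_i)>0$, $-\epsilon\le \bar y-\frac{\sum_i \hat y_i s^*_i}{\sum_i s^*_i}\le\epsilon$ and $-\epsilon\le \bar y-\frac{\sum_i \hat y_i (1-s^*_i)}{\sum_i (1-s^*_i)}\le\epsilon$ (statistical parity constraints). Four groups of indices: $G_1^+=\{i:\hat s_i=1,\hat y_i=1\}$, $G_0^+=\{i:\hat s_i=0,\hat y_i=1\}$, $G_1^-=\{i:\hat s_i=1,\hat y_i=0\}$, $G_0^-=\{i:\hat s_i=0,\hat y_i=0\}$, with cardinalities $n_1^+,n_0^+,n_1^-,n_0^-$. For each group $G$ with $|G|=n$, define the array $T_G[k]$ for $k=0,\dots,n$ as the sum of the $k$ smallest values among $\{p_i:i\in G\}$ (so $T_G[0]=0$); write $T_{1^+},T_{0^+},T_{1^-},T_{0^-}$. Problem $\mathcal{RC}_\mathcal{E}$ (efficient model):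 integer variables $s_{01}^+\in[0,n_0^+]$, $s_{10}^+\in[0,n_1^+]$, $s_{01}^-\in[0,n_0^-]$, $s_{10}^-\in[0,n_1^-]$; minimize $T_{0^+}[s_{01}^+]+T_{1^+}[s_{10}^+]+T_{0^-}[s_{01}^-]+T_{1^-}[s_{10}^-]$ subject to $n_0^++n_0^--s_{01}^+-s_{01}^-+s_{10}^++s_{10}^->0$, $n_1^++n_1^--s_{10}^+-s_{10}^-+s_{01}^++s_{01}^->0$, $-\epsilon\le\bar y-\frac{n_1^+-s_{10}^++s_{01}^+}{n_1^++n_1^--s_{10}^+-s_{10}^-+s_{01}^++s_{01}^-}\le\epsilon$, $-\epsilon\le\bar y-\frac{n_0^+-s_{01}^++s_{10}^+}{n_0^++n_0^--s_{01}^+-s_{01}^-+s_{10}^++s_{10}^-}\le\epsilon$. Post-processing $\Phi$: given a tuple $(s_{01}^+,s_{10}^+,s_{01}^-,s_{10}^-)$, obtain $s^*$ from $\hat s$ by flipping (changing $\hat s_i$ to $1-\hat s_i$) exactly $s_{01}^+$ indices of $G_0^+$, $s_{10}^+$ of $G_1^+$, $s_{01}^-$ of $G_0^-$ and $s_{10}^-$ of $G_1^-$, where in each group the flipped indices are ones with the smallest confidence values $p_i$ (ties broken arbitrarily, so the flipped set's total weight in group $G$ with $k$ flips equals $T_G[k]$); all other entries keep their value $\hat s_i$. *)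

theory Defs
  imports Complex_Main
begin

text \<open>Vectors in {0,1}^N are bool lists of length N (True = 1); the confidence
weights are a real list of length N; indices are 0..N-1.\<close>

definition ybar :: "nat \<Rightarrow> bool list \<Rightarrow> real" where
  "ybar N yh = (\<Sum>i<N. of_bool (yh ! i)) / real N"

definition RC_obj :: "nat \<Rightarrow> real list \<Rightarrow> bool list \<Rightarrow> bool list \<Rightarrow> real" where
  "RC_obj N p sh s =
     (\<Sum>i<N. p ! i * (1 - of_bool (sh ! i)) * of_bool (s ! i))
   + (\<Sum>i<N. p ! i * of_bool (sh ! i) * (1 - of_bool (s ! i)))"

definition RC_feasible :: "nat \<Rightarrow> bool list \<Rightarrow> real \<Rightarrow> bool list \<Rightarrow> bool" where
  "RC_feasible N yh eps s \<longleftrightarrow>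
     length s = N \<and>
     (\<Sum>i<N. of_bool (s ! i) :: real) > 0 \<and>
     (\<Sum>i<N. 1 - of_bool (s ! i) :: real) > 0 \<and>
     - eps \<le> ybar N yh - (\<Sum>i<N. of_bool (yh ! i) * of_bool (s ! i)) / (\<Sum>i<N. of_bool (s ! i)) \<and>
     ybar N yh - (\<Sum>i<N. of_bool (yh ! i) * of_bool (s ! i)) / (\<Sum>i<N. of_bool (s ! i)) \<le> eps \<and>
     - eps \<le> ybar N yh - (\<Sum>i<N. of_bool (yh ! i) * (1 - of_bool (s ! i))) / (\<Sum>i<N. 1 - of_bool (s ! i)) \<and>
     ybar N yh - (\<Sum>i<N. of_bool (yh ! i) * (1 - of_bool (s ! i))) / (\<Sum>i<N. 1 - of_bool (s ! i)) \<le> eps"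

definition RC_optimal :: "nat \<Rightarrow> bool list \<Rightarrow> bool list \<Rightarrow> real list \<Rightarrow> real \<Rightarrow> bool list \<Rightarrow> bool" where
  "RC_optimal N sh yh p eps s \<longleftrightarrow>
     RC_feasible N yh eps s \<and>
     (\<forall>s'. RC_feasible N yh eps s' \<longrightarrow> RC_obj N p sh s \<le> RC_obj N p sh s')"

text \<open>Group G_a^b = {i. shat_i = a, yhat_i = b} (a, b as booleans: True = 1, for yhat True = '+').\<close>
definition grp :: "nat \<Rightarrow> bool list \<Rightarrow> bool list \<Rightarrow> bool \<Rightarrow> bool \<Rightarrow> nat set" where
  "grp N sh yh a b = {i. i < N \<and> sh ! i = a \<and> yh ! i = b}"

definition ncnt :: "nat \<Rightarrow> bool list \<Rightarrow> bool list \<Rightarrow> bool \<Rightarrow> bool \<Rightarrow> nat" where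
  "ncnt N sh yh a b = card (grp N sh yh a b)"

definition Tg :: "nat \<Rightarrow> bool list \<Rightarrow> bool list \<Rightarrow> real list \<Rightarrow> bool \<Rightarrow> bool \<Rightarrow> nat \<Rightarrow> real" where
  "Tg N sh yh p a b k =
     sum_list (take k (sort (map (\<lambda>i. p ! i) (filter (\<lambda>i. sh ! i = a \<and> yh ! i = b) [0..<N]))))"

text \<open>Tuples (s01p, s10p, s01m, s10m) = (s_01^+, s_10^+, s_01^-, s_10^-).\<close>
type_synonym tuple4 = "nat \<times> nat \<times> nat \<times> nat"

definition RCE_obj :: "nat \<Rightarrow> bool list \<Rightarrow> bool list \<Rightarrow> real list \<Rightarrow> tuple4 \<Rightarrow> real" where
  "RCE_obj N sh yh p t = (case t of (s01p, s10p, s01m, s10m) \<Rightarrow>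
      Tg N sh yh p False True s01p + Tg N sh yh p True True s10p
    + Tg N sh yh p False False s01m + Tg N sh yh p True False s10m)"

definition RCE_feasible :: "nat \<Rightarrow> bool list \<Rightarrow> bool list \<Rightarrow> real \<Rightarrow> tuple4 \<Rightarrow> bool" where
  "RCE_feasible N sh yh eps t = (case t of (s01p, s10p, s01m, s10m) \<Rightarrow>
     (let n1p = ncnt N sh yh True True; n0p = ncnt N sh yh False True;
          n1m = ncnt N sh yh True False; n0m = ncnt N sh yh False False;
          D0 = real n0p + real n0m - real s01p - real s01m + real s10p + real s10m;
          D1 = real n1p + real n1m - real s10p - real s10m + real s01p + real s01m;
          P1 = real n1p - real s10p + real s01p;
          P0 = real n0p - real s01p + real s10p
      in s01p \<le> n0p \<and> s10p \<le> n1p \<and> s01m \<le> n0m \<and> s10m \<le> n1m \<and>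
         D0 > 0 \<and> D1 > 0 \<and>
         - eps \<le> ybar N yh - P1 / D1 \<and> ybar N yh - P1 / D1 \<le> eps \<and>
         - eps \<le> ybar N yh - P0 / D0 \<and> ybar N yh - P0 / D0 \<le> eps))"

definition RCE_optimal :: "nat \<Rightarrow> bool list \<Rightarrow> bool list \<Rightarrow> real list \<Rightarrow> real \<Rightarrow> tuple4 \<Rightarrow> bool" where
  "RCE_optimal N sh yh p eps t \<longleftrightarrow>
     RCE_feasible N sh yh eps t \<and>
     (\<forall>t'. RCE_feasible N sh yh eps t' \<longrightarrow> RCE_obj N sh yh p t \<le> RCE_obj N sh yh p t')"

definition flipped :: "bool list \<Rightarrow> bool list \<Rightarrow> nat set \<Rightarrow> nat set" where
  "flipped sh s G = {i \<in> G. s ! i \<noteq> sh ! i}"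

definition flips_ok :: "real list \<Rightarrow> bool list \<Rightarrow> bool list \<Rightarrow> nat set \<Rightarrow> nat \<Rightarrow> bool" where
  "flips_ok p sh s G k \<longleftrightarrow>
     card (flipped sh s G) = k \<and>
     (\<forall>i \<in> flipped sh s G. \<forall>j \<in> G - flipped sh s G. p ! i \<le> p ! j)"

text \<open>s is a possible output of the post-processing Phi applied to tuple t.\<close>
definition Phi :: "nat \<Rightarrow> bool list \<Rightarrow> bool list \<Rightarrow> real list \<Rightarrow> tuple4 \<Rightarrow> bool list \<Rightarrow> bool" where
  "Phi N sh yh p t s \<longleftrightarrow> length s = N \<and> (case t of (s01p, s10p, s01m, s10m) \<Rightarrow>
      flips_ok p sh s (grp N sh yh False True) s01p \<and>
      flips_ok p sh s (grp N sh yh True True) s10p \<and>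
      flips_ok p sh s (grp N sh yh False False) s01m \<and>
      flips_ok p sh s (grp N sh yh True False) s10m)"

definition flipcount :: "nat \<Rightarrow> bool list \<Rightarrow> bool list \<Rightarrow> bool list \<Rightarrow> tuple4" where
  "flipcount N sh yh s =
     (card (flipped sh s (grp N sh yh False True)), card (flipped sh s (grp N sh yh True True)),
      card (flipped sh s (grp N sh yh False False)), card (flipped sh s (grp N sh yh True False)))"

end

theory Submission imports Defs begin

lemma sort_map_key: "sort (map f xs) = map f (sort_key f (xs::'a list))" for f :: "'a \<Rightarrow> 'b::linorder"
proof -
  have ins: "map f (insort_key f x ys) = insort (f x) (map f ys)" for x ys
    by (induction ys) auto
  show ?thesis by (induction xs) (simp_all add: ins)
qed

lemma lower_le:
  fixes f :: "nat \<Rightarrow> real"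
  assumes "finite G" "A \<subseteq> G" "S \<subseteq> G" "card A = card S" "\<forall>a\<in>A. \<forall>b\<in>G-A. f a \<le> f b"
  shows "sum f A \<le> sum f S"
proof -
  have fA: "finite A" "finite S" using assms rev_finite_subset by metis+
  have "card (A - S) = card (S - A)"
    using card_Diff_subset_Int[of A S] card_Diff_subset_Int[of S A] fA assms(4)
    by (simp add: Int_commute)
  then obtain g where g: "bij_betw g (A - S) (S - A)"
    using finite_same_card_bij fA by blast
  have "sum f (S - A) = sum (\<lambda>x. f (g x)) (A - S)"
    using sum.reindex_bij_betw[OF g, of f] by simp
  moreover have "sum f (A - S) \<le> sum (\<lambda>x. f (g x)) (A - S)"
  proof (rule sum_mono)
    fix x assume x: "x \<in> A - S"
    then have "g x \<in> S - A" using g bij_betwE by blast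
    then show "f x \<le> f (g x)" using x assms by blast
  qed
  ultimately show ?thesis
    using sum.Int_Diff[of A f S] sum.Int_Diff[of S f A] fA by (simp add: Int_commute)
qed

lemma Tg_list:
  "\<exists>xs. distinct xs \<and> set xs = grp N sh yh a b \<and> sorted (map (\<lambda>i. p!i) xs) \<and>
     (\<forall>k. Tg N sh yh p a b k = sum (\<lambda>i. p!i) (set (take k xs)))"
proof -
  let ?f = "\<lambda>i. p!i"
  define xs where "xs = sort_key ?f (filter (\<lambda>i. sh ! i = a \<and> yh ! i = b) [0..<N])"
  have d: "distinct xs" unfolding xs_def by simp
  moreover have "set xs = grp N sh yh a b" unfolding xs_def grp_def by auto
  moreover have "sorted (map ?f xs)" unfolding xs_def by simp
  moreover have "\<forall>k. Tg N sh yh p a b k = sum ?f (set (take k xs))"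
  proof
    fix k
    have "Tg N sh yh p a b k = sum_list (map ?f (take k xs))"
      unfolding Tg_def xs_def sort_map_key take_map by simp
    also have "\<dots> = sum ?f (set (take k xs))"
      using d by (simp add: sum_list_distinct_conv_sum_set)
    finally show "Tg N sh yh p a b k = sum ?f (set (take k xs))" .
  qed
  ultimately show ?thesis by blast
qed

definition lower :: "real list \<Rightarrow> nat set \<Rightarrow> nat set \<Rightarrow> bool" where
  "lower p G A \<longleftrightarrow> (\<forall>i\<in>A. \<forall>j\<in>G - A. p!i \<le> p!j)"

lemma grp_finite: "finite (grp N sh yh a b)" unfolding grp_def by auto

lemma Tg_exists:
  assumes "k \<le> card (grp N sh yh a b)"
  shows "\<exists>A \<subseteq> grp N sh yh a b. card A = k \<and> lower p (grp N sh yh a b) A \<and>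
            Tg N sh yh p a b k = sum (\<lambda>i. p!i) A"
proof -
  obtain xs where xs: "distinct xs" "set xs = grp N sh yh a b" "sorted (map (\<lambda>i. p!i) xs)"
     "\<forall>k. Tg N sh yh p a b k = sum (\<lambda>i. p!i) (set (take k xs))"
    using Tg_list by blast
  have len: "length xs = card (grp N sh yh a b)" using xs distinct_card by fastforce
  let ?A = "set (take k xs)"
  have "?A \<subseteq> grp N sh yh a b" using xs set_take_subset by metis
  moreover have "card ?A = k" using xs(1) len assms by (simp add: distinct_card)
  moreover have "lower p (grp N sh yh a b) ?A"
    unfolding lower_def
  proof (intro ballI)
    fix i j assume i: "i \<in> ?A" and j: "j \<in> grp N sh yh a b - ?A"
    obtain m where m: "m < k" "m < length xs" "xs ! m = i" using i
      by (auto simp: in_set_conv_nth)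
    obtain m' where m': "m' < length xs" "xs ! m' = j" using j xs(2)
      by (metis DiffD1 in_set_conv_nth)
    have "\<not> m' < k" using m' j by (auto simp: in_set_conv_nth intro!: exI[of _ m'])
    then have "m \<le> m'" using m by simp
    then show "p!i \<le> p!j"
      using sorted_nth_mono[OF xs(3), of m m'] m m' by simp
  qed
  ultimately show ?thesis using xs(4) by blast
qed

lemma Tg_le:
  assumes "A \<subseteq> grp N sh yh a b"
  shows "Tg N sh yh p a b (card A) \<le> sum (\<lambda>i. p!i) A"
proof -
  have "card A \<le> card (grp N sh yh a b)" using assms grp_finite card_mono by blast
  then obtain B where B: "B \<subseteq> grp N sh yh a b" "card B = card A" "lower p (grp N sh yh a b) B"
     "Tg N sh yh p a b (card A) = sum (\<lambda>i. p!i) B"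
    using Tg_exists by metis
  show ?thesis using lower_le[OF grp_finite B(1) assms B(2)] B(3,4) unfolding lower_def by simp
qed

lemma Tg_eq:
  assumes "A \<subseteq> grp N sh yh a b" "lower p (grp N sh yh a b) A"
  shows "Tg N sh yh p a b (card A) = sum (\<lambda>i. p!i) A"
proof -
  have "card A \<le> card (grp N sh yh a b)" using assms grp_finite card_mono by blast
  then obtain B where B: "B \<subseteq> grp N sh yh a b" "card B = card A" "lower p (grp N sh yh a b) B"
     "Tg N sh yh p a b (card A) = sum (\<lambda>i. p!i) B"
    using Tg_exists by metis
  have "sum (\<lambda>i. p!i) B \<le> sum (\<lambda>i. p!i) A"
    using lower_le[OF grp_finite B(1) assms(1) B(2)] B(3) unfolding lower_def by simp
  moreover have "sum (\<lambda>i. p!i) A \<le> sum (\<lambda>i. p!i) B"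
    using lower_le[OF grp_finite assms(1) B(1)] B(2) assms(2) unfolding lower_def by simp
  ultimately show ?thesis using B(4) by simp
qed

lemma Tg_strict:
  assumes "A \<subseteq> grp N sh yh a b" "\<not> lower p (grp N sh yh a b) A"
  shows "Tg N sh yh p a b (card A) < sum (\<lambda>i. p!i) A"
proof -
  obtain i j where ij: "i \<in> A" "j \<in> grp N sh yh a b - A" "p!j < p!i"
    using assms(2) unfolding lower_def by force
  let ?B = "insert j (A - {i})"
  have fA: "finite A" using assms(1) grp_finite finite_subset by blast
  have B: "?B \<subseteq> grp N sh yh a b" using ij assms(1) by auto
  have cB: "card ?B = card A" using ij fA
    by (simp add: card_insert_if) (metis One_nat_def Suc_pred card_gt_0_iff empty_iff)
  have "sum (\<lambda>i. p!i) ?B = sum (\<lambda>i. p!i) A - p!i + p!j"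
    using ij fA by (simp add: sum_diff1)
  then have "sum (\<lambda>i. p!i) ?B < sum (\<lambda>i. p!i) A" using ij by simp
  then show ?thesis using Tg_le[OF B, of p] cB by simp
qed


lemma split4:
  fixes h :: "nat \<Rightarrow> real"
  shows "(\<Sum>i<N. h i) = sum h (grp N sh yh False True) + sum h (grp N sh yh True True)
     + sum h (grp N sh yh False False) + sum h (grp N sh yh True False)"
proof -
  have U: "{..<N} = ((grp N sh yh False True \<union> grp N sh yh True True) \<union> grp N sh yh False False) \<union> grp N sh yh True False"
    unfolding grp_def by auto
  have "(\<Sum>i<N. h i) = sum h (((grp N sh yh False True \<union> grp N sh yh True True) \<union> grp N sh yh False False) \<union> grp N sh yh True False)"
    by (subst U) simp
  also have "\<dots> = sum h ((grp N sh yh False True \<union> grp N sh yh True True) \<union> grp N sh yh False False) + sum h (grp N sh yh True False)"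
    by (rule sum.union_disjoint) (auto simp: grp_finite, auto simp: grp_def)
  also have "sum h ((grp N sh yh False True \<union> grp N sh yh True True) \<union> grp N sh yh False False) = sum h (grp N sh yh False True \<union> grp N sh yh True True) + sum h (grp N sh yh False False)"
    by (rule sum.union_disjoint) (auto simp: grp_finite, auto simp: grp_def)
  also have "sum h (grp N sh yh False True \<union> grp N sh yh True True) = sum h (grp N sh yh False True) + sum h (grp N sh yh True True)"
    by (rule sum.union_disjoint) (auto simp: grp_finite, auto simp: grp_def)
  finally show ?thesis .
qed

lemma sum_if_card:
  fixes h :: "nat \<Rightarrow> real"
  assumes "finite G" "F \<subseteq> G" "\<forall>i\<in>G. h i = (if i \<in> F then c1 else c2)"
  shows "sum h G = real (card F) * c1 + (real (card G) - real (card F)) * c2"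
proof -
  have fF: "finite F" using assms rev_finite_subset by metis
  have "sum h G = sum h F + sum h (G - F)"
    using sum.subset_diff[OF assms(2) assms(1), of h] by simp
  also have "sum h F = sum (\<lambda>_. c1) F" by (rule sum.cong) (use assms in auto)
  also have "\<dots> = real (card F) * c1" by simp
  also have "sum h (G - F) = sum (\<lambda>_. c2) (G - F)" by (rule sum.cong) (use assms in auto)
  also have "\<dots> = real (card (G - F)) * c2" by simp
  also have "real (card (G - F)) = real (card G) - real (card F)"
    using card_Diff_subset[OF fF assms(2)] card_mono[OF assms(1,2)] by simp
  finally show ?thesis .
qed

lemma s_in_grp:
  "i \<in> grp N sh yh a b \<Longrightarrow> s ! i = (if i \<in> flipped sh s (grp N sh yh a b) then \<not> a else a)"
  unfolding flipped_def grp_def by auto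

lemma flipped_sub: "flipped sh s G \<subseteq> G" unfolding flipped_def by auto

abbreviation cf where "cf N sh yh s a b \<equiv> real (card (flipped sh s (grp N sh yh a b)))"
abbreviation ng where "ng N sh yh a b \<equiv> real (ncnt N sh yh a b)"

lemma grp_s:
  "(\<Sum>i\<in>grp N sh yh a b. of_bool (s!i) :: real) = (if a then ng N sh yh a b - cf N sh yh s a b else cf N sh yh s a b)"
proof -
  have "\<forall>i\<in>grp N sh yh a b. (of_bool (s!i)::real) = (if i \<in> flipped sh s (grp N sh yh a b) then of_bool (\<not>a) else of_bool a)"
    using s_in_grp[where s=s] by auto
  from sum_if_card[OF grp_finite flipped_sub this] show ?thesis by (auto simp: ncnt_def)
qed

lemma grp_ys:
  "(\<Sum>i\<in>grp N sh yh a b. of_bool (yh!i) * of_bool (s!i) :: real) = of_bool b * (if a then ng N sh yh a b - cf N sh yh s a b else cf N sh yh s a b)"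
proof -
  have "(\<Sum>i\<in>grp N sh yh a b. of_bool (yh!i) * of_bool (s!i) :: real) = (\<Sum>i\<in>grp N sh yh a b. of_bool b * of_bool (s!i))"
    by (rule sum.cong) (auto simp: grp_def)
  then show ?thesis by (simp add: sum_distrib_left[symmetric] grp_s)
qed

lemma grp_ns:
  "(\<Sum>i\<in>grp N sh yh a b. 1 - of_bool (s!i) :: real) = ng N sh yh a b - (if a then ng N sh yh a b - cf N sh yh s a b else cf N sh yh s a b)"
  by (simp add: sum_subtractf grp_s ncnt_def)

lemma grp_yns:
  "(\<Sum>i\<in>grp N sh yh a b. of_bool (yh!i) * (1 - of_bool (s!i)) :: real) = of_bool b * (ng N sh yh a b - (if a then ng N sh yh a b - cf N sh yh s a b else cf N sh yh s a b))"
proof -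
  have "(\<Sum>i\<in>grp N sh yh a b. of_bool (yh!i) * (1 - of_bool (s!i)) :: real) = (\<Sum>i\<in>grp N sh yh a b. of_bool b * (1 - of_bool (s!i)))"
    by (rule sum.cong) (auto simp: grp_def)
  then show ?thesis by (simp add: sum_distrib_left[symmetric] grp_ns)
qed

lemma RC_obj_split:
  "RC_obj N p sh s = sum (\<lambda>i. p!i) (flipped sh s (grp N sh yh False True))
     + sum (\<lambda>i. p!i) (flipped sh s (grp N sh yh True True))
     + sum (\<lambda>i. p!i) (flipped sh s (grp N sh yh False False))
     + sum (\<lambda>i. p!i) (flipped sh s (grp N sh yh True False))"
proof -
  have fl: "sum (\<lambda>i. p!i) (flipped sh s G) = (\<Sum>i\<in>G. if s!i \<noteq> sh!i then p!i else 0)" if "finite G" for G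
    unfolding flipped_def using sum.inter_filter[OF that] by simp
  have e: "RC_obj N p sh s = (\<Sum>i<N. if s!i \<noteq> sh!i then p!i else 0)"
    unfolding RC_obj_def sum.distrib[symmetric] by (rule sum.cong) auto
  show ?thesis unfolding e split4[of "\<lambda>i. if s!i \<noteq> sh!i then p!i else 0" N sh yh]
    by (simp add: fl grp_finite)
qed

lemma feas_iff:
  "RC_feasible N yh eps s \<longleftrightarrow> length s = N \<and> RCE_feasible N sh yh eps (flipcount N sh yh s)"
proof -
  have bnd: "card (flipped sh s (grp N sh yh a b)) \<le> ncnt N sh yh a b" for a b
    unfolding ncnt_def by (rule card_mono[OF grp_finite flipped_sub])
  show ?thesis
    unfolding RC_feasible_def RCE_feasible_def flipcount_def Let_def
    apply (simp only: split4[where N=N and sh=sh and yh=yh] grp_s grp_ys grp_ns grp_yns case_prod_conv)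
    using bnd by (simp add: algebra_simps) (simp only: conj_ac)
qed


lemma flips_ok_iff: "flips_ok p sh s G k \<longleftrightarrow> card (flipped sh s G) = k \<and> lower p G (flipped sh s G)"
  unfolding flips_ok_def lower_def by blast

lemma obj_ge: "RCE_obj N sh yh p (flipcount N sh yh s) \<le> RC_obj N p sh s"
  unfolding RCE_obj_def flipcount_def RC_obj_split[where yh=yh] case_prod_conv
  by (intro add_mono Tg_le flipped_sub)

lemma Phi_obj:
  assumes "Phi N sh yh p t s"
  shows "flipcount N sh yh s = t \<and> RC_obj N p sh s = RCE_obj N sh yh p t"
proof -
  obtain k1 k2 k3 k4 where t: "t = (k1, k2, k3, k4)" by (cases t) auto
  note a = assms[unfolded Phi_def t case_prod_conv flips_ok_iff]
  show ?thesis
    unfolding t flipcount_def RCE_obj_def RC_obj_split[where yh=yh] case_prod_conv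
    using a by (simp add: Tg_eq[OF flipped_sub, symmetric])
qed

lemma construct:
  assumes "A1 \<subseteq> grp N sh yh False True" "A2 \<subseteq> grp N sh yh True True"
    "A3 \<subseteq> grp N sh yh False False" "A4 \<subseteq> grp N sh yh True False"
  defines "s \<equiv> map (\<lambda>i. if i \<in> A1 \<union> A2 \<union> A3 \<union> A4 then \<not> sh!i else sh!i) [0..<N]"
  shows "length s = N" "flipped sh s (grp N sh yh False True) = A1" "flipped sh s (grp N sh yh True True) = A2"
    "flipped sh s (grp N sh yh False False) = A3" "flipped sh s (grp N sh yh True False) = A4"
proof -
  show "length s = N" unfolding s_def by simp
  have f: "flipped sh s (grp N sh yh a b) = (A1 \<union> A2 \<union> A3 \<union> A4) \<inter> grp N sh yh a b" for a b
    unfolding flipped_def s_def by (auto simp: grp_def)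
  show "flipped sh s (grp N sh yh False True) = A1" "flipped sh s (grp N sh yh True True) = A2"
    "flipped sh s (grp N sh yh False False) = A3" "flipped sh s (grp N sh yh True False) = A4"
    unfolding f using assms(1-4) by (auto simp: grp_def)
qed

lemma Phi_exists:
  assumes "k1 \<le> ncnt N sh yh False True" "k2 \<le> ncnt N sh yh True True"
    "k3 \<le> ncnt N sh yh False False" "k4 \<le> ncnt N sh yh True False"
  shows "\<exists>s. Phi N sh yh p (k1, k2, k3, k4) s"
proof -
  obtain A1 where A1: "A1 \<subseteq> grp N sh yh False True" "card A1 = k1" "lower p (grp N sh yh False True) A1"
    using Tg_exists[of k1 N sh yh False True p] assms(1) unfolding ncnt_def by blast
  obtain A2 where A2: "A2 \<subseteq> grp N sh yh True True" "card A2 = k2" "lower p (grp N sh yh True True) A2"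
    using Tg_exists[of k2 N sh yh True True p] assms(2) unfolding ncnt_def by blast
  obtain A3 where A3: "A3 \<subseteq> grp N sh yh False False" "card A3 = k3" "lower p (grp N sh yh False False) A3"
    using Tg_exists[of k3 N sh yh False False p] assms(3) unfolding ncnt_def by blast
  obtain A4 where A4: "A4 \<subseteq> grp N sh yh True False" "card A4 = k4" "lower p (grp N sh yh True False) A4"
    using Tg_exists[of k4 N sh yh True False p] assms(4) unfolding ncnt_def by blast
  note c = construct[OF A1(1) A2(1) A3(1) A4(1)]
  show ?thesis
    unfolding Phi_def case_prod_conv flips_ok_iff
    by (rule exI[of _ "map (\<lambda>i. if i \<in> A1 \<union> A2 \<union> A3 \<union> A4 then \<not> sh!i else sh!i) [0..<N]"], simp only: c A1 A2 A3 A4 simp_thms)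
qed

lemma RCE_bounds:
  "RCE_feasible N sh yh eps (k1, k2, k3, k4) \<Longrightarrow> k1 \<le> ncnt N sh yh False True \<and> k2 \<le> ncnt N sh yh True True \<and>
    k3 \<le> ncnt N sh yh False False \<and> k4 \<le> ncnt N sh yh True False"
  unfolding RCE_feasible_def Let_def by simp

lemma Phi_feas:
  assumes "Phi N sh yh p t s" "RCE_feasible N sh yh eps t"
  shows "RC_feasible N yh eps s"
  using assms Phi_obj[OF assms(1)] feas_iff[of N yh eps s sh] unfolding Phi_def by simp

lemma RCE_feas_Phi:
  assumes "RCE_feasible N sh yh eps t"
  shows "\<exists>s. Phi N sh yh p t s \<and> RC_feasible N yh eps s"
proof -
  obtain k1 k2 k3 k4 where t: "t = (k1, k2, k3, k4)" by (cases t) auto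
  obtain s where "Phi N sh yh p t s" using Phi_exists RCE_bounds assms unfolding t by metis
  then show ?thesis using Phi_feas assms by blast
qed


lemma opt_Phi:
  assumes "RC_optimal N sh yh p eps s"
  shows "Phi N sh yh p (flipcount N sh yh s) s"
proof -
  have fs: "RC_feasible N yh eps s" using assms unfolding RC_optimal_def by blast
  then have len: "length s = N" and tf: "RCE_feasible N sh yh eps (flipcount N sh yh s)"
    using feas_iff by blast+
  obtain s0 where s0: "Phi N sh yh p (flipcount N sh yh s) s0" "RC_feasible N yh eps s0"
    using RCE_feas_Phi[OF tf] by blast
  have "RC_obj N p sh s \<le> RC_obj N p sh s0" using assms s0(2) unfolding RC_optimal_def by blast
  also have "\<dots> = RCE_obj N sh yh p (flipcount N sh yh s)" using Phi_obj[OF s0(1)] by simp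
  finally have opt: "RC_obj N p sh s \<le> RCE_obj N sh yh p (flipcount N sh yh s)" .
  have le: "Tg N sh yh p a b (card (flipped sh s (grp N sh yh a b))) \<le> sum (\<lambda>i. p!i) (flipped sh s (grp N sh yh a b))" for a b
    by (rule Tg_le[OF flipped_sub])
  have E: "RCE_obj N sh yh p (flipcount N sh yh s) =
      Tg N sh yh p False True (card (flipped sh s (grp N sh yh False True)))
    + Tg N sh yh p True True (card (flipped sh s (grp N sh yh True True)))
    + Tg N sh yh p False False (card (flipped sh s (grp N sh yh False False)))
    + Tg N sh yh p True False (card (flipped sh s (grp N sh yh True False)))"
    unfolding RCE_obj_def flipcount_def by simp
  note O = RC_obj_split[where yh=yh and s=s and p=p and sh=sh and N=N]
  have L: "lower p (grp N sh yh a b) (flipped sh s (grp N sh yh a b))" for a b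
  proof (rule ccontr)
    assume "\<not> ?thesis"
    from Tg_strict[OF flipped_sub this]
    have st: "Tg N sh yh p a b (card (flipped sh s (grp N sh yh a b))) < sum (\<lambda>i. p!i) (flipped sh s (grp N sh yh a b))" .
    show False
      using opt E O st le[of False True] le[of True True] le[of False False] le[of True False]
      by (cases a; cases b) auto
  qed
  show ?thesis
    unfolding Phi_def flipcount_def case_prod_conv flips_ok_iff using len L by simp
qed

lemma fin_RC: "finite {s. RC_feasible N yh eps s}"
  by (rule finite_subset[OF _ finite_lists_length_eq[OF finite_UNIV, of N]])
     (auto simp: RC_feasible_def)

lemma fin_RCE: "finite {t. RCE_feasible N sh yh eps t}"
proof (rule finite_subset)
  show "{t. RCE_feasible N sh yh eps t} \<subseteq> {..ncnt N sh yh False True} \<times> {..ncnt N sh yh True True}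
     \<times> {..ncnt N sh yh False False} \<times> {..ncnt N sh yh True False}"
    using RCE_bounds by fastforce
qed auto

theorem theorem1:
  fixes N :: nat and sh yh :: "bool list" and p :: "real list" and eps :: real
  assumes "N \<ge> 1" and "length sh = N" and "length yh = N" and "length p = N"
    and "\<forall>i<N. p ! i \<ge> 0" and "eps \<ge> 0"
  shows "((\<exists>s. RC_feasible N yh eps s) \<longleftrightarrow> (\<exists>t. RCE_feasible N sh yh eps t))
     \<and> ((\<exists>s. RC_feasible N yh eps s) \<longrightarrow>
          Min (RC_obj N p sh ` {s. RC_feasible N yh eps s})
          = Min (RCE_obj N sh yh p ` {t. RCE_feasible N sh yh eps t}))
     \<and> (\<forall>t s. RCE_optimal N sh yh p eps t \<and> Phi N sh yh p t s \<longrightarrow> RC_optimal N sh yh p eps s)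
     \<and> (\<forall>s. RC_optimal N sh yh p eps s \<longrightarrow>
          RCE_optimal N sh yh p eps (flipcount N sh yh s) \<and> Phi N sh yh p (flipcount N sh yh s) s)"
proof (intro conjI allI impI)
  show eq: "(\<exists>s. RC_feasible N yh eps s) \<longleftrightarrow> (\<exists>t. RCE_feasible N sh yh eps t)"
    using feas_iff RCE_feas_Phi by metis
  assume ex: "\<exists>s. RC_feasible N yh eps s"
  then obtain s1 where s1: "RC_feasible N yh eps s1" by blast
  let ?A = "RC_obj N p sh ` {s. RC_feasible N yh eps s}"
  let ?B = "RCE_obj N sh yh p ` {t. RCE_feasible N sh yh eps t}"
  have fA: "finite ?A" "?A \<noteq> {}" using fin_RC s1 by auto
  have fB: "finite ?B" "?B \<noteq> {}" using fin_RCE s1 feas_iff[of N yh eps s1 sh] by blast+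
  have "Min ?A \<le> Min ?B"
  proof -
    obtain t where t: "RCE_feasible N sh yh eps t" "Min ?B = RCE_obj N sh yh p t"
      using Min_in[OF fB] by auto
    obtain s where s: "Phi N sh yh p t s" "RC_feasible N yh eps s" using RCE_feas_Phi[OF t(1)] by blast
    have "Min ?A \<le> RC_obj N p sh s" using fA s(2) by simp
    then show ?thesis using Phi_obj[OF s(1)] t(2) by simp
  qed
  moreover have "Min ?B \<le> Min ?A"
  proof -
    obtain s where s: "RC_feasible N yh eps s" "Min ?A = RC_obj N p sh s"
      using Min_in[OF fA] by auto
    have "RCE_feasible N sh yh eps (flipcount N sh yh s)" using s(1) feas_iff by blast
    then have "Min ?B \<le> RCE_obj N sh yh p (flipcount N sh yh s)" using fB by simp
    then show ?thesis using obj_ge[of N sh yh p s] s(2) by simp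
  qed
  ultimately show "Min ?A = Min ?B" by simp
next
  fix t s assume a: "RCE_optimal N sh yh p eps t \<and> Phi N sh yh p t s"
  then have tf: "RCE_feasible N sh yh eps t" unfolding RCE_optimal_def by blast
  have ob: "RC_obj N p sh s = RCE_obj N sh yh p t" using Phi_obj a by blast
  show "RC_optimal N sh yh p eps s"
    unfolding RC_optimal_def
  proof (intro conjI allI impI)
    show "RC_feasible N yh eps s" using Phi_feas a tf by blast
    fix s' assume s': "RC_feasible N yh eps s'"
    then have "RCE_feasible N sh yh eps (flipcount N sh yh s')" using feas_iff by blast
    then have "RCE_obj N sh yh p t \<le> RCE_obj N sh yh p (flipcount N sh yh s')"
      using a unfolding RCE_optimal_def by blast
    then show "RC_obj N p sh s \<le> RC_obj N p sh s'" using ob obj_ge[of N sh yh p s'] by simp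
  qed
next
  fix s assume a: "RC_optimal N sh yh p eps s"
  show ph: "Phi N sh yh p (flipcount N sh yh s) s" using opt_Phi[OF a] .
  have ob: "RC_obj N p sh s = RCE_obj N sh yh p (flipcount N sh yh s)" using Phi_obj[OF ph] by simp
  show "RCE_optimal N sh yh p eps (flipcount N sh yh s)"
    unfolding RCE_optimal_def
  proof (intro conjI allI impI)
    show "RCE_feasible N sh yh eps (flipcount N sh yh s)" using a feas_iff unfolding RC_optimal_def by blast
    fix t' assume t': "RCE_feasible N sh yh eps t'"
    obtain s' where s': "Phi N sh yh p t' s'" "RC_feasible N yh eps s'" using RCE_feas_Phi[OF t'] by blast
    have "RC_obj N p sh s \<le> RC_obj N p sh s'" using a s'(2) unfolding RC_optimal_def by blast
    then show "RCE_obj N sh yh p (flipcount N sh yh s) \<le> RCE_obj N sh yh p t'"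
      using ob Phi_obj[OF s'(1)] by simp
  qed
qed

end
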